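(* Let $\alpha \in [0,1)$. For every $k \in \{1,\dots,m-2\}$, with $\mathbf{S}_k = (S_k,\dots,S_k)$, $$S_{\min}\sqrt[n]{1-\alpha} + S_k\left(1 - \sqrt[n]{1-\alpha}\right) \le B_{T_h}^*(\mathbf{S}_k) \le S_{\min}\sqrt[n]{1-\alpha} + S_{k+1}\left(1 - \sqrt[n]{1-\alpha}\right).$$
   Context: Fix integers $m \ge 3$, $n \ge 1$ and reals $S_{\min} < S_{\max}$; $S = \{S_0,\dots,S_{m-1}\}$ with $S_k = S_{\min} + k\frac{S_{\max}-S_{\min}}{m-1}$. $\mathcal{F}$ is the set of probability distributions on $S$, identified with the probability simplex in $\mathbb{R}^m$ with the Euclidean topology; $E[F]$ is the mean. $\Omega$ is the set of samples of size $n$ from $S$, identified with their sorted versions $x_{(1)} \le \dots \le x_{(n)}$. $P_F[\Omega']$ is the probability that the sorted sample of $n$ i.i.d. draws from $F$ lies in $\Omega' \subseteq \Omega$; $\mathcal{G}(\Omega',\alpha) = \{F : P_F[\Omega'] > \alpha\}$ and $\mathcal{F}(\Omega',\alpha)$ is its closure. The high lexicographic order $T_h$: $\mathbf{x} \le_{T_h} \mathbf{y}$ iff $\mathbf{x}=\mathbf{y}$ or at the largest index $j$ with $x_{(j)} \ne y_{(j)}$ we have $x_{(j)} < y_{(j)}$. $\Omega(\mathbf{x},T_h) = \{\mathbf{y} : \mathbf{x} \le_{T_h} \mathbf{y}\}$ and $B_{T_h}^*(\mathbf{x}) = \min\{E[F] : F \in \mathcal{F}(\Omega(\mathbf{x},T_h),\alpha)\}$.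 *)

theory Defs
  imports "HOL-Analysis.Analysis"
begin

definition Spt :: "nat \<Rightarrow> real \<Rightarrow> real \<Rightarrow> nat \<Rightarrow> real" where
  "Spt m Smin Smax k = Smin + real k * (Smax - Smin) / (real m - 1)"

definition distrs :: "nat \<Rightarrow> (nat \<Rightarrow> real) set" where
  "distrs m = {F. (\<forall>i<m. 0 \<le> F i) \<and> (\<Sum>i<m. F i) = 1 \<and> (\<forall>i\<ge>m. F i = 0)}"

definition mean :: "nat \<Rightarrow> real \<Rightarrow> real \<Rightarrow> (nat \<Rightarrow> real) \<Rightarrow> real" where
  "mean m Smin Smax F = (\<Sum>i<m. F i * Spt m Smin Smax i)"

definition samples :: "nat \<Rightarrow> nat \<Rightarrow> real \<Rightarrow> real \<Rightarrow> real list set" where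
  "samples m n Smin Smax = {x. length x = n \<and> sorted x \<and> set x \<subseteq> Spt m Smin Smax ` {..<m}}"

text \<open>P_F[Omega']: probability that the sorted sample of n iid draws from F lies in Omega'.
  Sum over all ordered draw sequences (lists of indices) of their probabilities.\<close>
definition probF :: "nat \<Rightarrow> nat \<Rightarrow> real \<Rightarrow> real \<Rightarrow> (nat \<Rightarrow> real) \<Rightarrow> real list set \<Rightarrow> real" where
  "probF m n Smin Smax F \<Omega>' =
     (\<Sum>w\<in>{w. length w = n \<and> set w \<subseteq> {..<m}}.
        if sort (map (Spt m Smin Smax) w) \<in> \<Omega>' then (\<Prod>i<n. F (w ! i)) else 0)"

definition Gset :: "nat \<Rightarrow> nat \<Rightarrow> real \<Rightarrow> real \<Rightarrow> real list set \<Rightarrow> real \<Rightarrow> (nat \<Rightarrow> real) set" where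
  "Gset m n Smin Smax \<Omega>' \<alpha> = {F \<in> distrs m. probF m n Smin Smax F \<Omega>' > \<alpha>}"

definition Fset :: "nat \<Rightarrow> nat \<Rightarrow> real \<Rightarrow> real \<Rightarrow> real list set \<Rightarrow> real \<Rightarrow> (nat \<Rightarrow> real) set" where
  "Fset m n Smin Smax \<Omega>' \<alpha> = {F. (\<forall>i\<ge>m. F i = 0) \<and>
     (\<forall>\<epsilon>>0. \<exists>G\<in>Gset m n Smin Smax \<Omega>' \<alpha>. sqrt (\<Sum>i<m. (F i - G i)\<^sup>2) < \<epsilon>)}"

definition le_Th :: "nat \<Rightarrow> real list \<Rightarrow> real list \<Rightarrow> bool" where
  "le_Th n x y \<longleftrightarrow> x = y \<or>
     (\<exists>j<n. x ! j \<noteq> y ! j \<and> (\<forall>i. j < i \<and> i < n \<longrightarrow> x ! i = y ! i) \<and> x ! j < y ! j)"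

definition OmegaTh :: "nat \<Rightarrow> nat \<Rightarrow> real \<Rightarrow> real \<Rightarrow> real list \<Rightarrow> real list set" where
  "OmegaTh m n Smin Smax x = {y \<in> samples m n Smin Smax. le_Th n x y}"

definition Bstar :: "nat \<Rightarrow> nat \<Rightarrow> real \<Rightarrow> real \<Rightarrow> real \<Rightarrow> real list \<Rightarrow> real" where
  "Bstar m n Smin Smax \<alpha> x =
     Inf (mean m Smin Smax ` Fset m n Smin Smax (OmegaTh m n Smin Smax x) \<alpha>)"

end

theory Submission
  imports Defs
begin

definition Wds :: "nat set \<Rightarrow> nat \<Rightarrow> nat list set" where
  "Wds A n = {w. length w = n \<and> set w \<subseteq> A}"

lemma Wds_finite: "finite A \<Longrightarrow> finite (Wds A n)"
proof -
  assume "finite A"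
  then have "finite {xs. set xs \<subseteq> A \<and> length xs = n}" by (rule finite_lists_length_eq)
  moreover have "{xs. set xs \<subseteq> A \<and> length xs = n} = Wds A n" by (auto simp: Wds_def)
  ultimately show ?thesis by simp
qed

lemma Wds_Suc: "Wds A (Suc n) = (\<lambda>(x,w). x # w) ` (A \<times> Wds A n)"
proof
  show "Wds A (Suc n) \<subseteq> (\<lambda>(x,w). x # w) ` (A \<times> Wds A n)"
  proof
    fix w assume "w \<in> Wds A (Suc n)"
    then obtain x v where "w = x # v" "x \<in> A" "v \<in> Wds A n"
      unfolding Wds_def by (cases w) auto
    then show "w \<in> (\<lambda>(x,w). x # w) ` (A \<times> Wds A n)" by force
  qed
qed (auto simp: Wds_def)

lemma Wds_sum:
  fixes F :: "nat \<Rightarrow> real"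
  assumes "finite A"
  shows "(\<Sum>w\<in>Wds A n. \<Prod>i<n. F (w ! i)) = (sum F A) ^ n"
proof (induction n)
  case 0
  have "Wds A 0 = {[]}" by (auto simp: Wds_def)
  then show ?case by simp
next
  case (Suc n)
  have inj: "inj_on (\<lambda>(x,w). x # w) (A \<times> Wds A n)"
    by (auto simp: inj_on_def)
  have "(\<Sum>w\<in>Wds A (Suc n). \<Prod>i<Suc n. F (w ! i))
      = (\<Sum>p\<in>A \<times> Wds A n. \<Prod>i<Suc n. F ((fst p # snd p) ! i))"
    unfolding Wds_Suc by (subst sum.reindex[OF inj]) (simp add: case_prod_beta)
  also have "\<dots> = (\<Sum>p\<in>A \<times> Wds A n. F (fst p) * (\<Prod>i<n. F (snd p ! i)))"
    by (simp del: prod.lessThan_Suc add: prod.lessThan_Suc_shift)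
  also have "\<dots> = (\<Sum>x\<in>A. \<Sum>w\<in>Wds A n. F x * (\<Prod>i<n. F (w ! i)))"
    by (simp add: sum.cartesian_product case_prod_beta)
  also have "\<dots> = (\<Sum>x\<in>A. F x * (sum F A) ^ n)"
    by (simp add: sum_distrib_left[symmetric] Suc.IH)
  also have "\<dots> = (sum F A) ^ Suc n" by (simp add: sum_distrib_right[symmetric])
  finally show ?case .
qed

lemma probF_alt:
  assumes "F \<in> distrs m"
  shows "probF m n Smin Smax F \<Omega> = 1 - (\<Sum>w\<in>Wds {..<m} n.
           if sort (map (Spt m Smin Smax) w) \<notin> \<Omega> then (\<Prod>i<n. F (w ! i)) else 0)"
proof -
  have tot: "(\<Sum>w\<in>Wds {..<m} n. \<Prod>i<n. F (w ! i)) = 1"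
    using assms by (simp add: Wds_sum distrs_def)
  have "probF m n Smin Smax F \<Omega> = (\<Sum>w\<in>Wds {..<m} n. (\<Prod>i<n. F (w ! i)) -
           (if sort (map (Spt m Smin Smax) w) \<notin> \<Omega> then (\<Prod>i<n. F (w ! i)) else 0))"
    unfolding probF_def Wds_def by (rule sum.cong) auto
  also have "\<dots> = 1 - (\<Sum>w\<in>Wds {..<m} n.
           if sort (map (Spt m Smin Smax) w) \<notin> \<Omega> then (\<Prod>i<n. F (w ! i)) else 0)"
    by (simp add: sum_subtractf tot)
  finally show ?thesis .
qed

lemma Spt_mono:
  assumes "m \<ge> 3" "Smin < Smax" "i < j"
  shows "Spt m Smin Smax i < Spt m Smin Smax j"
proof -
  have "real m - 1 > 0" using assms by simp
  moreover have "real i * (Smax - Smin) < real j * (Smax - Smin)"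
    using assms by (intro mult_strict_right_mono) auto
  ultimately show ?thesis unfolding Spt_def by (simp add: divide_strict_right_mono)
qed

theorem lemma8:
  fixes m n k :: nat and Smin Smax \<alpha> :: real
  assumes "m \<ge> 3" and "n \<ge> 1" and "Smin < Smax"
    and "0 \<le> \<alpha>" and "\<alpha> < 1"
    and "1 \<le> k" and "k \<le> m - 2"
  shows "Smin * root n (1 - \<alpha>) + Spt m Smin Smax k * (1 - root n (1 - \<alpha>))
           \<le> Bstar m n Smin Smax \<alpha> (replicate n (Spt m Smin Smax k))
       \<and> Bstar m n Smin Smax \<alpha> (replicate n (Spt m Smin Smax k))
           \<le> Smin * root n (1 - \<alpha>) + Spt m Smin Smax (k + 1) * (1 - root n (1 - \<alpha>))"
proof -
  define Sp where "Sp = Spt m Smin Smax"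
  define x where "x = replicate n (Sp k)"
  define \<Omega> where "\<Omega> = OmegaTh m n Smin Smax x"
  define r where "r = root n (1 - \<alpha>)"
  define L where "L = Smin * r + Sp k * (1 - r)"
  define U where "U = Smin * r + Sp (k+1) * (1 - r)"
  have n0: "n > 0" using assms by simp
  have km: "k + 1 < m" using assms by simp
  have r0: "r > 0" unfolding r_def using assms n0 by simp
  have r1: "r \<le> 1" unfolding r_def using assms n0 by simp
  have rn: "r ^ n = 1 - \<alpha>" unfolding r_def using assms n0 by (simp add: real_root_pow_pos2)
  have Spmono: "\<And>i j. i < j \<Longrightarrow> Sp i < Sp j" unfolding Sp_def using assms Spt_mono by blast
  have Sp0: "Sp 0 = Smin" by (simp add: Sp_def Spt_def)
  have notin: "sort (map Sp w) \<notin> \<Omega>" if "w \<in> Wds {..<k} n" for w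
  proof
    assume yin: "sort (map Sp w) \<in> \<Omega>"
    define y where "y = sort (map Sp w)"
    have ly: "length y = n" using that by (simp add: y_def Wds_def)
    have lt: "\<And>j. j < n \<Longrightarrow> y ! j < Sp k"
    proof -
      fix j assume "j < n"
      then have "y ! j \<in> set y" using ly by simp
      then have "y ! j \<in> Sp ` set w" by (simp add: y_def)
      then show "y ! j < Sp k" using that Spmono by (auto simp: Wds_def)
    qed
    have "le_Th n x y" using yin by (simp add: \<Omega>_def OmegaTh_def y_def)
    moreover have "x \<noteq> y" using lt[OF n0] n0 by (auto simp: x_def)
    moreover have "\<not> (x ! j < y ! j)" if "j < n" for j
      using lt[OF that] that by (simp add: x_def)
    ultimately show False unfolding le_Th_def by blast
  qed
  have isin: "sort (map Sp w) \<in> \<Omega>" if "w \<in> Wds {..<m} n" "k + 1 \<in> set w" for w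
  proof -
    define y where "y = sort (map Sp w)"
    have ly: "length y = n" using that by (simp add: y_def Wds_def)
    have samp: "y \<in> samples m n Smin Smax"
      using that by (auto simp: samples_def y_def Wds_def Sp_def)
    have "Sp (k+1) \<in> set y" using that by (simp add: y_def)
    then obtain i where i: "i < n" "y ! i = Sp (k+1)" using ly by (metis in_set_conv_nth)
    have "y ! i \<le> y ! (n - 1)"
      using i n0 ly by (intro sorted_nth_mono) (auto simp: y_def)
    then have "x ! (n-1) < y ! (n-1)" using i Spmono[of k "k+1"] n0 by (simp add: x_def)
    then have "le_Th n x y" unfolding le_Th_def using n0
      by (intro disjI2 exI[of _ "n-1"]) auto
    with samp show ?thesis by (simp add: \<Omega>_def OmegaTh_def y_def)
  qed
  have Gbound: "mean m Smin Smax G \<ge> L" if G: "G \<in> Gset m n Smin Smax \<Omega> \<alpha>" for G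
  proof -
    have Gd: "G \<in> distrs m" and Gp: "probF m n Smin Smax G \<Omega> > \<alpha>"
      using G by (auto simp: Gset_def)
    have Gnn: "\<And>i. i < m \<Longrightarrow> G i \<ge> 0" and Gs: "(\<Sum>i<m. G i) = 1"
      using Gd by (auto simp: distrs_def)
    define a where "a = (\<Sum>i<k. G i)"
    have a0: "a \<ge> 0" unfolding a_def using Gnn km by (intro sum_nonneg) auto
    have "(\<Sum>w\<in>Wds {..<m} n. if sort (map Sp w) \<notin> \<Omega> then (\<Prod>i<n. G (w ! i)) else 0)
        \<ge> (\<Sum>w\<in>Wds {..<m} n. if set w \<subseteq> {..<k} then (\<Prod>i<n. G (w ! i)) else 0)"
    proof (rule sum_mono)
      fix w assume w: "w \<in> Wds {..<m} n"
      have "(\<Prod>i<n. G (w ! i)) \<ge> 0"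
      proof (intro prod_nonneg Gnn)
        fix i assume "i \<in> {..<n}"
        then have "w ! i \<in> set w" using w by (simp add: Wds_def)
        then show "w ! i < m" using w by (auto simp: Wds_def)
      qed
      moreover have "set w \<subseteq> {..<k} \<Longrightarrow> sort (map Sp w) \<notin> \<Omega>"
        using notin w by (auto simp: Wds_def)
      ultimately show "(if set w \<subseteq> {..<k} then (\<Prod>i<n. G (w ! i)) else 0)
          \<le> (if sort (map Sp w) \<notin> \<Omega> then (\<Prod>i<n. G (w ! i)) else 0)" by auto
    qed
    also have "(\<Sum>w\<in>Wds {..<m} n. if set w \<subseteq> {..<k} then (\<Prod>i<n. G (w ! i)) else 0)
       = (\<Sum>w\<in>Wds {..<k} n. (\<Prod>i<n. G (w ! i)))"
    proof -
      define B where "B = {..<k}"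
      have sub: "B \<subseteq> {..<m}" using km by (auto simp: B_def)
      have eq: "{w \<in> Wds {..<m} n. set w \<subseteq> B} = Wds B n"
      proof (intro set_eqI iffI)
        fix w assume w: "w \<in> {w \<in> Wds {..<m} n. set w \<subseteq> B}"
        then show "w \<in> Wds B n" unfolding Wds_def by blast
      next
        fix w assume w: "w \<in> Wds B n"
        then have "set w \<subseteq> {..<m}" "length w = n" using sub unfolding Wds_def by auto
        with w show "w \<in> {w \<in> Wds {..<m} n. set w \<subseteq> B}" unfolding Wds_def by blast
      qed
      have fin: "finite (Wds {..<m} n)" by (simp add: Wds_finite)
      show ?thesis
      proof -
        have "(\<Sum>w\<in>Wds {..<m} n. if set w \<subseteq> B then (\<Prod>i<n. G (w ! i)) else 0)
           = (\<Sum>w\<in>Wds B n. (\<Prod>i<n. G (w ! i)))"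
          by (simp only: sum.inter_filter[OF fin, symmetric] eq)
        then show ?thesis by (simp only: B_def)
      qed
    qed
    also have "\<dots> = a ^ n" by (simp add: Wds_sum a_def)
    finally have "a ^ n \<le> 1 - probF m n Smin Smax G \<Omega>"
      using probF_alt[OF Gd, of n Smin Smax \<Omega>] by (simp add: Sp_def)
    then have "a ^ n < r ^ n" using Gp rn by simp
    then have ar: "a < r" using a0 r0 by (meson power_less_imp_less_base less_imp_le)
    define h where "h = (Smax - Smin) / (real m - 1)"
    have h0: "h > 0" unfolding h_def using assms by simp
    have Spe: "\<And>i. Sp i = Smin + real i * h" by (simp add: Sp_def Spt_def h_def)
    have "mean m Smin Smax G = Smin + h * (\<Sum>i<m. G i * real i)"
    proof -
      have "mean m Smin Smax G = (\<Sum>i<m. Smin * G i) + (\<Sum>i<m. h * (G i * real i))"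
        unfolding mean_def Sp_def[symmetric] Spe by (simp add: algebra_simps sum.distrib)
      also have "\<dots> = Smin * (\<Sum>i<m. G i) + h * (\<Sum>i<m. G i * real i)"
        by (simp add: sum_distrib_left)
      finally show ?thesis using Gs by simp
    qed
    moreover have "(\<Sum>i<m. G i * real i) \<ge> real k * (1 - a)"
    proof -
      have "(\<Sum>i<m. G i * real i) \<ge> (\<Sum>i<m. real k * G i - real k * (if i < k then G i else 0))"
      proof (rule sum_mono)
        fix i assume "i \<in> {..<m}"
        then have "G i \<ge> 0" using Gnn by simp
        then show "real k * G i - real k * (if i < k then G i else 0) \<le> G i * real i"
          by (cases "i < k") (auto simp: mult.commute intro!: mult_left_mono)
      qed
      moreover have "(\<Sum>i<m. (if i < k then G i else 0)) = a"
      proof -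
        have eq: "{i \<in> {..<m}. i < k} = {..<k}" using km by auto
        have "(\<Sum>i<m. (if i < k then G i else 0)) = sum G {i \<in> {..<m}. i < k}"
          by (rule sum.inter_filter[symmetric]) simp
        also have "\<dots> = a" by (simp only: eq a_def)
        finally show ?thesis .
      qed
      moreover have "(\<Sum>i<m. G i * real k) = real k"
        by (simp add: sum_distrib_right[symmetric] Gs)
      ultimately show ?thesis
        by (simp add: sum_subtractf sum_distrib_left[symmetric] Gs algebra_simps)
    qed
    ultimately have "mean m Smin Smax G \<ge> Smin + h * (real k * (1 - a))"
      using h0 by (smt (verit) mult_left_mono)
    moreover have "h * (real k * (1 - a)) \<ge> h * (real k * (1 - r))"
      using h0 ar by (intro mult_left_mono) auto
    ultimately show ?thesis unfolding L_def Spe by (simp add: algebra_simps)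
  qed
  define M where "M = (\<Sum>i<m. \<bar>Sp i\<bar>)"
  have M0: "M \<ge> 0" unfolding M_def by (simp add: sum_nonneg)
  have Fbound: "mean m Smin Smax F \<ge> L" if F: "F \<in> Fset m n Smin Smax \<Omega> \<alpha>" for F
  proof (rule ccontr)
    assume "\<not> ?thesis"
    then have d: "L - mean m Smin Smax F > 0" by simp
    define e where "e = (L - mean m Smin Smax F) / (M + 1)"
    have e0: "e > 0" unfolding e_def using d M0 by simp
    obtain G where G: "G \<in> Gset m n Smin Smax \<Omega> \<alpha>" and dG: "sqrt (\<Sum>i<m. (F i - G i)\<^sup>2) < e"
      using F e0 unfolding Fset_def by blast
    have comp: "\<bar>F i - G i\<bar> \<le> e" if "i < m" for i
    proof -
      have "(F i - G i)\<^sup>2 \<le> (\<Sum>i<m. (F i - G i)\<^sup>2)"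
        using that by (intro member_le_sum) auto
      then have "sqrt ((F i - G i)\<^sup>2) \<le> sqrt (\<Sum>i<m. (F i - G i)\<^sup>2)"
        using real_sqrt_le_mono by blast
      then show ?thesis using dG by simp
    qed
    have "\<bar>mean m Smin Smax G - mean m Smin Smax F\<bar> = \<bar>\<Sum>i<m. (G i - F i) * Sp i\<bar>"
      unfolding mean_def Sp_def by (simp add: sum_subtractf left_diff_distrib)
    also have "\<dots> \<le> (\<Sum>i<m. \<bar>(G i - F i) * Sp i\<bar>)" by (rule sum_abs)
    also have "\<dots> \<le> (\<Sum>i<m. e * \<bar>Sp i\<bar>)"
    proof (rule sum_mono)
      fix i assume "i \<in> {..<m}"
      then have "\<bar>G i - F i\<bar> \<le> e" using comp by (simp add: abs_minus_commute)
      then show "\<bar>(G i - F i) * Sp i\<bar> \<le> e * \<bar>Sp i\<bar>"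
        by (simp add: abs_mult mult_right_mono)
    qed
    also have "\<dots> = e * M" by (simp add: M_def sum_distrib_left)
    also have "\<dots> < e * (M + 1)" using e0 by simp
    also have "\<dots> = L - mean m Smin Smax F" unfolding e_def using M0 by simp
    finally show False using Gbound[OF G] by simp
  qed
  define H where "H = (\<lambda>d::real. \<lambda>i::nat. (if i = 0 then r - d else 0) + (if i = k + 1 then 1 - r + d else 0))"
  have Hd: "H d \<in> distrs m" if "0 \<le> d" "d \<le> r" for d
  proof -
    have "(\<Sum>i<m. H d i) = (r - d) + (1 - r + d)"
      unfolding H_def using km by (simp add: sum.distrib)
    then show ?thesis unfolding distrs_def H_def using that r1 km by auto
  qed
  have Hmean: "mean m Smin Smax (H 0) = U"
  proof -
    have "mean m Smin Smax (H 0) = (\<Sum>i<m. (if i = 0 then r * Sp i else 0) + (if i = k+1 then (1-r) * Sp i else 0))"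
      unfolding mean_def H_def Sp_def[symmetric] by (intro sum.cong) auto
    also have "\<dots> = r * Sp 0 + (1 - r) * Sp (k+1)" using km by (simp add: sum.distrib)
    finally show ?thesis unfolding U_def Sp0 by simp
  qed
  have HG: "H d \<in> Gset m n Smin Smax \<Omega> \<alpha>" if "0 < d" "d \<le> r" for d
  proof -
    have nn: "\<And>i. H d i \<ge> 0" unfolding H_def using that r1 by auto
    have "(\<Sum>w\<in>Wds {..<m} n. if sort (map Sp w) \<notin> \<Omega> then (\<Prod>i<n. H d (w ! i)) else 0)
        \<le> (\<Sum>w\<in>Wds {..<m} n. if set w \<subseteq> {0} then (\<Prod>i<n. H d (w ! i)) else 0)"
    proof (rule sum_mono)
      fix w assume w: "w \<in> Wds {..<m} n"
      show "(if sort (map Sp w) \<notin> \<Omega> then (\<Prod>i<n. H d (w ! i)) else 0)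
          \<le> (if set w \<subseteq> {0} then (\<Prod>i<n. H d (w ! i)) else 0)"
      proof (cases "set w \<subseteq> {0}")
        case True
        then show ?thesis by (simp add: prod_nonneg nn)
      next
        case False
        then obtain j where j: "j \<in> set w" "j \<noteq> 0" by auto
        show ?thesis
        proof (cases "j = k + 1")
          case True
          then show ?thesis using isin[OF w] j False by simp
        next
          case jk: False
          obtain i where i: "i < length w" "w ! i = j" using j by (metis in_set_conv_nth)
          have "H d (w ! i) = 0" using i j jk by (simp add: H_def)
          then have z: "(\<Prod>i<n. H d (w ! i)) = 0"
            using i w by (intro prod_zero) (auto simp: Wds_def)
          show ?thesis using False by (simp only: z if_False if_cancel order_refl)
        qed
      qed
    qed
    also have "\<dots> = (\<Sum>w\<in>Wds {0} n. (\<Prod>i<n. H d (w ! i)))"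
    proof -
      define B where "B = {0::nat}"
      have sub: "B \<subseteq> {..<m}" using km by (auto simp: B_def)
      have eq: "{w \<in> Wds {..<m} n. set w \<subseteq> B} = Wds B n"
      proof (intro set_eqI iffI)
        fix w assume w: "w \<in> {w \<in> Wds {..<m} n. set w \<subseteq> B}"
        then show "w \<in> Wds B n" unfolding Wds_def by blast
      next
        fix w assume w: "w \<in> Wds B n"
        then have "set w \<subseteq> {..<m}" "length w = n" using sub unfolding Wds_def by auto
        with w show "w \<in> {w \<in> Wds {..<m} n. set w \<subseteq> B}" unfolding Wds_def by blast
      qed
      have fin: "finite (Wds {..<m} n)" by (simp add: Wds_finite)
      show ?thesis
      proof -
        have "(\<Sum>w\<in>Wds {..<m} n. if set w \<subseteq> B then (\<Prod>i<n. H d (w ! i)) else 0)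
           = (\<Sum>w\<in>Wds B n. (\<Prod>i<n. H d (w ! i)))"
          by (simp only: sum.inter_filter[OF fin, symmetric] eq)
        then show ?thesis by (simp only: B_def)
      qed
    qed
    also have "\<dots> = (H d 0) ^ n" by (simp add: Wds_sum)
    also have "\<dots> = (r - d) ^ n" by (simp add: H_def)
    also have "\<dots> < r ^ n" using that n0 by (intro power_strict_mono) auto
    finally have "probF m n Smin Smax (H d) \<Omega> > \<alpha>"
      using probF_alt[OF Hd[of d], of n Smin Smax \<Omega>] that rn by (simp add: Sp_def)
    then show ?thesis using Hd[of d] that unfolding Gset_def by simp
  qed
  have H0F: "H 0 \<in> Fset m n Smin Smax \<Omega> \<alpha>"
    unfolding Fset_def
  proof (intro CollectI conjI allI impI)
    fix i :: nat assume "m \<le> i" then show "H 0 i = 0" using km by (simp add: H_def)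
  next
    fix e :: real assume e: "e > 0"
    define d where "d = min (e/2) r"
    have d0: "0 < d" "d \<le> r" "d \<le> e/2" using e r0 by (auto simp: d_def)
    have sq: "(\<Sum>i<m. (H 0 i - H d i)\<^sup>2) = 2 * d\<^sup>2"
    proof -
      have "\<And>i. (H 0 i - H d i)\<^sup>2 = (if i = 0 then d\<^sup>2 else 0) + (if i = k+1 then d\<^sup>2 else 0)"
        by (auto simp: H_def power2_eq_square)
      then show ?thesis using km by (simp add: sum.distrib)
    qed
    have "sqrt (2 * d\<^sup>2) = sqrt 2 * d" using d0 by (simp add: real_sqrt_mult)
    also have "\<dots> < 2 * d"
    proof -
      have "sqrt 2 < sqrt 4" by (simp only: real_sqrt_less_iff)
      then have "sqrt 2 < 2" by simp
      then show ?thesis using d0 by (intro mult_strict_right_mono) auto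
    qed
    also have "\<dots> \<le> e" using d0 by simp
    finally have "sqrt (2 * d\<^sup>2) < e" .
    then have "sqrt (\<Sum>i<m. (H 0 i - H d i)\<^sup>2) < e" by (simp only: sq)
    then show "\<exists>G\<in>Gset m n Smin Smax \<Omega> \<alpha>. sqrt (\<Sum>i<m. (H 0 i - G i)\<^sup>2) < e"
      using HG[OF d0(1,2)] by blast
  qed
  have B: "Bstar m n Smin Smax \<alpha> x = Inf (mean m Smin Smax ` Fset m n Smin Smax \<Omega> \<alpha>)"
    by (simp add: Bstar_def \<Omega>_def)
  have lo: "L \<le> Bstar m n Smin Smax \<alpha> x"
    unfolding B using H0F Fbound by (intro cInf_greatest) auto
  have hi: "Bstar m n Smin Smax \<alpha> x \<le> U"
    unfolding B Hmean[symmetric] using H0F Fbound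
    by (intro cInf_lower) (auto simp: bdd_below_def)
  show ?thesis using lo hi unfolding L_def U_def x_def Sp_def r_def by simp
qed

end
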